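(* Let $n\geq 1$. The monoid $M_n$ is left-cancellative and admits conditional right-lcms: any two elements of $M_n$ that admit a common right-multiple admit a right-lcm.
   Context: $M_n$ denotes the monoid with generators $\rho_1,\dots,\rho_n$ and relations $\rho_1\rho_n\rho_i=\rho_{i+1}\rho_n$ for $1\leq i\leq n-1$. $c$ is a right-multiple of $a$ if $c=ab$ for some $b$. A right-lcm of $a,b$ is a common right-multiple of $a$ and $b$ that left-divides every common right-multiple of $a$ and $b$. *)

theory Defs
  imports Main
begin

text \<open>Elements of the monoid M_n are represented by words (lists) over the generators
  rho_1, ..., rho_n, encoded as the natural numbers 1..n; two words represent the same
  element iff they are related by the congruence generated by the defining relations
  rho_1 rho_n rho_i = rho_(i+1) rho_n for 1 <= i <= n-1.\<close>

definition Mn_words :: "nat \<Rightarrow> nat list set" where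
  "Mn_words n = lists {1..n}"

definition Mn_rel :: "nat \<Rightarrow> nat list \<Rightarrow> nat list \<Rightarrow> bool" where
  "Mn_rel n u v \<longleftrightarrow> (\<exists>i. 1 \<le> i \<and> i \<le> n - 1 \<and> u = [1, n, i] \<and> v = [i + 1, n])"

inductive Mn_eq :: "nat \<Rightarrow> nat list \<Rightarrow> nat list \<Rightarrow> bool" for n where
  refl: "Mn_eq n w w"
| sym: "Mn_eq n u v \<Longrightarrow> Mn_eq n v u"
| trans: "Mn_eq n u v \<Longrightarrow> Mn_eq n v w \<Longrightarrow> Mn_eq n u w"
| step: "Mn_rel n u v \<Longrightarrow> Mn_eq n (x @ u @ y) (x @ v @ y)"

definition Mn_right_multiple :: "nat \<Rightarrow> nat list \<Rightarrow> nat list \<Rightarrow> bool" where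
  "Mn_right_multiple n c a \<longleftrightarrow> (\<exists>b\<in>Mn_words n. Mn_eq n c (a @ b))"

definition Mn_common_right_multiple :: "nat \<Rightarrow> nat list \<Rightarrow> nat list \<Rightarrow> nat list \<Rightarrow> bool" where
  "Mn_common_right_multiple n c a b \<longleftrightarrow> Mn_right_multiple n c a \<and> Mn_right_multiple n c b"

definition Mn_right_lcm :: "nat \<Rightarrow> nat list \<Rightarrow> nat list \<Rightarrow> nat list \<Rightarrow> bool" where
  "Mn_right_lcm n c a b \<longleftrightarrow> c \<in> Mn_words n \<and> Mn_common_right_multiple n c a b \<and>
     (\<forall>d\<in>Mn_words n. Mn_common_right_multiple n d a b \<longrightarrow> Mn_right_multiple n d c)"

definition Mn_left_cancellative :: "nat \<Rightarrow> bool" where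
  "Mn_left_cancellative n \<longleftrightarrow>
     (\<forall>a\<in>Mn_words n. \<forall>b\<in>Mn_words n. \<forall>c\<in>Mn_words n.
        Mn_eq n (a @ b) (a @ c) \<longrightarrow> Mn_eq n b c)"

definition Mn_conditional_right_lcms :: "nat \<Rightarrow> bool" where
  "Mn_conditional_right_lcms n \<longleftrightarrow>
     (\<forall>a\<in>Mn_words n. \<forall>b\<in>Mn_words n.
        (\<exists>c\<in>Mn_words n. Mn_common_right_multiple n c a b) \<longrightarrow>
        (\<exists>c. Mn_right_lcm n c a b))"

end

theory Submission
  imports Defs
begin


lemma Mn_eq_ctx: "Mn_eq n u v \<Longrightarrow> Mn_eq n (x@u@y) (x@v@y)"
proof (induction rule: Mn_eq.induct)
  case (refl w) then show ?case by (blast intro: Mn_eq.refl)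
next
  case (sym u v) then show ?case by (blast intro: Mn_eq.sym)
next
  case (trans u v w) then show ?case by (metis Mn_eq.trans)
next
  case (step u v x' y')
  have "Mn_eq n ((x@x')@u@(y'@y)) ((x@x')@v@(y'@y))" by (rule Mn_eq.step[OF step])
  then show ?case by simp
qed

lemma Mn_eq_app: "Mn_eq n u v \<Longrightarrow> Mn_eq n u' v' \<Longrightarrow> Mn_eq n (u@u') (v@v')"
proof -
  assume a: "Mn_eq n u v" and b: "Mn_eq n u' v'"
  have "Mn_eq n (u@u') (v@u')" using Mn_eq_ctx[OF a, of "[]" u'] by simp
  moreover have "Mn_eq n (v@u') (v@v')" using Mn_eq_ctx[OF b, of v "[]"] by simp
  ultimately show ?thesis by (rule Mn_eq.trans)
qed

lemma Mn_eq_sum: "Mn_eq n u v \<Longrightarrow> sum_list u = sum_list v"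
  by (induction rule: Mn_eq.induct) (auto simp: Mn_rel_def)

lemma Mn_eq_rel: "1 \<le> i \<Longrightarrow> i \<le> n - 1 \<Longrightarrow> Mn_eq n [1,n,i] [i+1,n]"
  using Mn_eq.step[of n "[1,n,i]" "[i+1,n]" "[]" "[]"] by (auto simp: Mn_rel_def)

lemma Mn_eq_trans': "Mn_eq n u v \<Longrightarrow> Mn_eq n v w \<Longrightarrow> Mn_eq n u w" by (rule Mn_eq.trans)
lemma Mn_eq_sym': "Mn_eq n u v \<Longrightarrow> Mn_eq n v u" by (rule Mn_eq.sym)
lemma Mn_eq_refl': "u = v \<Longrightarrow> Mn_eq n u v" by (simp add: Mn_eq.refl)

lemma Mn_eq_appL: "Mn_eq n u v \<Longrightarrow> Mn_eq n (x@u) (x@v)"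
  using Mn_eq_ctx[of n u v x "[]"] by simp
lemma Mn_eq_appR: "Mn_eq n u v \<Longrightarrow> Mn_eq n (u@y) (v@y)"
  using Mn_eq_ctx[of n u v "[]" y] by simp

definition NN :: "nat \<Rightarrow> nat \<Rightarrow> nat list" where "NN n k = replicate k n"
definition sig :: "nat \<Rightarrow> nat \<Rightarrow> nat list" where "sig n j = concat (replicate j [1,n])"

lemma NN_add: "NN n (a+b) = NN n a @ NN n b" by (simp add: NN_def replicate_add)
lemma sig_add: "sig n (a+b) = sig n a @ sig n b" by (simp add: sig_def replicate_add)
lemma sig_Suc: "sig n (Suc j) = [1,n] @ sig n j" by (simp add: sig_def)
lemma sig_Suc': "sig n (Suc j) = sig n j @ [1,n]"
  using sig_add[of n j 1] by (simp add: sig_def)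
lemma NN_Suc: "NN n (Suc j) = n # NN n j" by (simp add: NN_def)
lemma NN_Suc': "NN n (Suc j) = NN n j @ [n]" by (simp add: NN_def replicate_append_same)
lemma NN_0[simp]: "NN n 0 = []" by (simp add: NN_def)
lemma sig_0[simp]: "sig n 0 = []" by (simp add: sig_def)

lemma D2: "1 \<le> a \<Longrightarrow> a + j \<le> n \<Longrightarrow> Mn_eq n (sig n j @ [a]) ([a+j] @ NN n j)"
proof (induction j arbitrary: a)
  case 0 then show ?case by (simp add: Mn_eq.refl)
next
  case (Suc j)
  have "Mn_eq n (sig n j @ [1,n,a]) (sig n j @ [a+1,n])"
    by (rule Mn_eq_appL, rule Mn_eq_rel) (use Suc.prems in auto)
  moreover have "Mn_eq n ((sig n j @ [a+1]) @ [n]) (([a+1+j] @ NN n j) @ [n])"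
    by (rule Mn_eq_appR, rule Suc.IH) (use Suc.prems in auto)
  ultimately show ?case
    by (auto simp: sig_Suc' NN_Suc' intro: Mn_eq_trans')
qed

lemma D3: "1 \<le> a \<Longrightarrow> a \<le> n \<Longrightarrow> Mn_eq n ([a] @ NN n a) (sig n a)"
proof (induction a)
  case 0 then show ?case by simp
next
  case (Suc a)
  show ?case
  proof (cases "a = 0")
    case True then show ?thesis by (simp add: NN_def sig_def Mn_eq.refl)
  next
    case False
    have "Mn_eq n ([a+1,n] @ NN n a) ([1,n,a] @ NN n a)"
      by (rule Mn_eq_appR, rule Mn_eq_sym', rule Mn_eq_rel) (use Suc.prems False in auto)
    moreover have "Mn_eq n ([1,n] @ ([a] @ NN n a)) ([1,n] @ sig n a)"
      by (rule Mn_eq_appL, rule Suc.IH) (use Suc.prems False in auto)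
    ultimately show ?thesis
      by (auto simp: sig_Suc NN_Suc intro: Mn_eq_trans')
  qed
qed

lemma D4: "1 \<le> c \<Longrightarrow> c \<le> n \<Longrightarrow> Mn_eq n (NN n (n+1) @ [c]) ([c] @ NN n (n+1))"
proof -
  assume c: "1 \<le> c" "c \<le> n"
  have e1: "Mn_eq n (NN n (n+1) @ [c]) (sig n n @ [c])"
    using Mn_eq_appR[OF D3[of n n], of "[c]"] c by (simp add: NN_Suc)
  have "sig n n = sig n c @ sig n (n-c)" using sig_add[of n c "n-c"] c by simp
  then have e2: "Mn_eq n (sig n n @ [c]) (sig n c @ [n] @ NN n (n-c))"
    using Mn_eq_appL[OF D2[of c "n-c" n], of "sig n c"] c by simp
  have e3: "Mn_eq n (sig n c @ ([n] @ NN n (n-c))) (([c] @ NN n c) @ ([n] @ NN n (n-c)))"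
    using Mn_eq_appR[OF Mn_eq_sym'[OF D3[of c n]]] c by simp
  have "([c] @ NN n c) @ ([n] @ NN n (n-c)) = [c] @ NN n (n+1)"
    using c NN_add[of n c "Suc (n-c)"] by (simp add: NN_Suc)
  then show ?thesis using e1 e2 e3 by (metis Mn_eq_trans' append_assoc)
qed

lemma D5: "set w \<subseteq> {1..n} \<Longrightarrow> Mn_eq n (NN n (n+1) @ w) (w @ NN n (n+1))"
proof (induction w)
  case Nil then show ?case by (simp add: Mn_eq.refl)
next
  case (Cons c w)
  have "Mn_eq n ((NN n (n+1) @ [c]) @ w) (([c] @ NN n (n+1)) @ w)"
    by (rule Mn_eq_appR, rule D4) (use Cons.prems in auto)
  moreover have "Mn_eq n ([c] @ (NN n (n+1) @ w)) ([c] @ (w @ NN n (n+1)))"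
    by (rule Mn_eq_appL, rule Cons.IH) (use Cons.prems in auto)
  ultimately show ?case by (auto intro: Mn_eq_trans')
qed




definition qq :: "nat \<Rightarrow> bool \<Rightarrow> nat" where "qq n k = (if k then Suc n else n)"

definition nok :: "bool \<Rightarrow> (bool\<times>nat) list \<Rightarrow> bool" where
  "nok k r = (case r of [] \<Rightarrow> True | (k',_)#_ \<Rightarrow> k' \<noteq> k)"

fun red :: "nat \<Rightarrow> (bool\<times>nat) list \<Rightarrow> bool" where
  "red n [] = True"
| "red n ((k,a)#r) = (0<a \<and> a<qq n k \<and> nok k r \<and> red n r)"

lemma nok_simps[simp]: "nok k [] = True" "nok k ((k',b)#r) = (k' \<noteq> k)"
  by (auto simp: nok_def)

fun LL :: "nat \<Rightarrow> bool \<Rightarrow> nat \<Rightarrow> (bool\<times>nat) list \<Rightarrow> (bool\<times>nat) list" where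
  "LL n k a [] = (if a mod qq n k = 0 then [] else [(k, a mod qq n k)])"
| "LL n k a ((k',b)#r) = (if k' = k then (if (a+b) mod qq n k = 0 then r else (k,(a+b) mod qq n k)#r)
      else (if a mod qq n k = 0 then (k',b)#r else (k, a mod qq n k)#(k',b)#r))"

lemma qq_pos: "1 \<le> n \<Longrightarrow> 0 < qq n k" by (simp add: qq_def)

lemma LL_other: "nok k r \<Longrightarrow> LL n k a r = (if a mod qq n k = 0 then r else (k, a mod qq n k)#r)"
  by (cases r) auto

lemma nok_tail: "red n ((k,a)#r) \<Longrightarrow> nok k r" by simp

lemma red_LL: "1 \<le> n \<Longrightarrow> red n h \<Longrightarrow> red n (LL n k a h)"
proof (cases h)
  case Nil
  assume "1 \<le> n" then show ?thesis using Nil qq_pos[of n k] by auto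
next
  case (Cons p r)
  assume n: "1 \<le> n" and h: "red n h"
  obtain k' b where p: "p = (k',b)" by (cases p)
  have q: "0 < qq n k" using qq_pos[OF n] .
  show ?thesis
  proof (cases "k' = k")
    case True
    then show ?thesis using h Cons p q by (auto simp: nok_def)
  next
    case False
    then show ?thesis using h Cons p q by auto
  qed
qed

lemma LL_LL: "1 \<le> n \<Longrightarrow> red n h \<Longrightarrow> LL n k a (LL n k b h) = LL n k (a+b) h"
proof (cases h)
  case Nil
  assume "1 \<le> n" then show ?thesis using Nil
    by (auto simp: mod_simps add.commute)
next
  case (Cons p r)
  assume n: "1 \<le> n" and h: "red n h"
  obtain k' c where p: "p = (k',c)" by (cases p)
  show ?thesis
  proof (cases "k' = k")
    case True
    then have r: "nok k r" using h Cons p by simp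
    show ?thesis using True Cons p LL_other[OF r]
      by (auto simp: mod_simps add.assoc)
  next
    case False
    then show ?thesis using Cons p by (auto simp: mod_simps add.assoc)
  qed
qed

lemma LL_id: assumes h: "red n h" and a: "a mod qq n k = 0" shows "LL n k a h = h"
proof (cases h)
  case Nil then show ?thesis using a by simp
next
  case (Cons p r)
  obtain k' c where p: "p = (k',c)" by (cases p)
  show ?thesis using h a Cons p by (cases k; cases k') (auto simp: mod_simps dvd_add_right_iff dest: dvd_imp_le)
qed

definition act :: "nat \<Rightarrow> nat \<Rightarrow> (bool\<times>nat) list \<Rightarrow> (bool\<times>nat) list" where
  "act n s h = (if s < n then LL n False s (LL n True (Suc n - s) h) else LL n True 1 h)"

definition Phi :: "nat \<Rightarrow> nat list \<Rightarrow> (bool\<times>nat) list" where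
  "Phi n u = foldr (act n) u []"

lemma red_act: "1 \<le> n \<Longrightarrow> red n h \<Longrightarrow> red n (act n s h)"
  by (simp add: act_def red_LL)

lemma red_foldr: "1 \<le> n \<Longrightarrow> red n h \<Longrightarrow> red n (foldr (act n) x h)"
  by (induction x) (auto simp: red_act)

lemma red_Phi: "1 \<le> n \<Longrightarrow> red n (Phi n u)"
  by (simp add: Phi_def red_foldr)

lemma Phi_Cons: "Phi n (s # u) = act n s (Phi n u)" by (simp add: Phi_def)
lemma Phi_app: "Phi n (x @ y) = foldr (act n) x (Phi n y)" by (simp add: Phi_def)

lemma act_rel:
  assumes i: "1 \<le> i" "i \<le> n - 1" and h: "red n h"
  shows "act n 1 (act n n (act n i h)) = act n (i+1) (act n n h)"
proof -
  have n: "2 \<le> n" "1 \<le> n" using i by auto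
  have ilt: "i < n" "1 < n" using i by auto
  have r1: "red n (LL n True (Suc n - i) h)" using red_LL[OF n(2) h] .
  have r2: "red n (LL n False i (LL n True (Suc n - i) h))" using red_LL[OF n(2) r1] .
  have "act n 1 (act n n (act n i h)) = LL n False 1 (LL n True n (LL n True 1 (LL n False i (LL n True (Suc n - i) h))))"
    using ilt by (simp add: act_def)
  also have "\<dots> = LL n False 1 (LL n False i (LL n True (Suc n - i) h))"
    using LL_LL[OF n(2) r2, of True n 1] LL_id[OF r2, of "n+1" True] by (simp add: qq_def)
  also have "\<dots> = LL n False (i+1) (LL n True (Suc n - i) h)"
    using LL_LL[OF n(2) r1, of False 1 i] by simp
  finally have L: "act n 1 (act n n (act n i h)) = LL n False (i+1) (LL n True (Suc n - i) h)" .
  show ?thesis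
  proof (cases "i + 1 < n")
    case True
    have "act n (i+1) (act n n h) = LL n False (i+1) (LL n True (Suc n - (i+1)) (LL n True 1 h))"
      using True by (simp add: act_def)
    also have "\<dots> = LL n False (i+1) (LL n True (Suc n - i) h)"
      using LL_LL[OF n(2) h, of True "Suc n - (i+1)" 1] True by (simp add: Suc_diff_Suc Suc_diff_le)
    finally show ?thesis using L by simp
  next
    case False
    then have ii: "i + 1 = n" using i by auto
    have r3: "red n (LL n True (Suc n - i) h)" by (rule r1)
    have "act n (i+1) (act n n h) = LL n True 1 (LL n True 1 h)" using ii by (simp add: act_def)
    also have "\<dots> = LL n True (Suc n - i) h" using LL_LL[OF n(2) h, of True 1 1] ii
      by (simp add: numeral_2_eq_2 flip: ii)
    also have "\<dots> = LL n False (i+1) (LL n True (Suc n - i) h)"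
      using LL_id[OF r3, of "i+1" False] ii by (simp add: qq_def)
    finally show ?thesis using L by simp
  qed
qed

lemma Phi_inv: "Mn_eq n u v \<Longrightarrow> Phi n u = Phi n v"
proof (induction rule: Mn_eq.induct)
  case (step u v x y)
  then obtain i where i: "1 \<le> i" "i \<le> n - 1" "u = [1,n,i]" "v = [i+1,n]" by (auto simp: Mn_rel_def)
  have "1 \<le> n" using i by auto
  then have "red n (Phi n y)" by (rule red_Phi)
  then have "foldr (act n) u (Phi n y) = foldr (act n) v (Phi n y)"
    using i act_rel[OF i(1,2)] by simp
  then show ?case by (simp only: Phi_app)
qed auto

lemma LL_inj:
  assumes n: "1 \<le> n" and h: "red n h1" "red n h2" and e: "LL n k a h1 = LL n k a h2"
  shows "h1 = h2"
proof -
  define b where "b = qq n k - a mod qq n k"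
  have q: "0 < qq n k" using qq_pos[OF n] .
  have "(b + a) mod qq n k = 0"
  proof -
    have "(b + a) mod qq n k = (b + a mod qq n k) mod qq n k" by (simp add: mod_simps)
    also have "b + a mod qq n k = qq n k" using q by (simp add: b_def)
    finally show ?thesis by simp
  qed
  then have "\<And>h. red n h \<Longrightarrow> LL n k b (LL n k a h) = h" using LL_LL[OF n] LL_id by simp
  then show ?thesis using e h by metis
qed

lemma act_inj: assumes n: "1 \<le> n" and h: "red n h1" "red n h2" and e: "act n s h1 = act n s h2"
  shows "h1 = h2"
proof (cases "s < n")
  case True
  then have "LL n False s (LL n True (Suc n - s) h1) = LL n False s (LL n True (Suc n - s) h2)"
    using e by (simp add: act_def)
  then have "LL n True (Suc n - s) h1 = LL n True (Suc n - s) h2"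
    by (rule LL_inj[OF n red_LL[OF n h(1)] red_LL[OF n h(2)]])
  then show ?thesis by (rule LL_inj[OF n h])
next
  case False
  then have "LL n True 1 h1 = LL n True 1 h2" using e by (simp add: act_def)
  then show ?thesis by (rule LL_inj[OF n h])
qed

lemma foldr_inj: "1 \<le> n \<Longrightarrow> red n h1 \<Longrightarrow> red n h2 \<Longrightarrow> foldr (act n) x h1 = foldr (act n) x h2 \<Longrightarrow> h1 = h2"
proof (induction x)
  case Nil then show ?case by simp
next
  case (Cons a x)
  have "foldr (act n) x h1 = foldr (act n) x h2"
    using act_inj[OF Cons.prems(1) red_foldr[OF Cons.prems(1,2)] red_foldr[OF Cons.prems(1,3)]] Cons.prems(4)
    by simp
  then show ?case using Cons by blast
qed




fun mw :: "nat \<Rightarrow> (bool\<times>nat) list \<Rightarrow> nat list" where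
  "mw n [] = []"
| "mw n ((True,b)#r) = NN n b @ mw n r"
| "mw n ((False,a)#[]) = a # NN n a"
| "mw n ((False,a)#(True,b)#r) = a # NN n ((a+b) mod (Suc n)) @ mw n r"
| "mw n ((False,a)#(False,b)#r) = []"

fun kk :: "nat \<Rightarrow> nat \<Rightarrow> (bool\<times>nat) list \<Rightarrow> nat" where
  "kk n s ((True,b)#(False,a)#[]) = (if s = n then (if b = n then 1 else 0) else if b = s \<and> s+a \<ge> n then 1 else 0)"
| "kk n s ((True,b)#(False,a)#(k,b2)#r) = (if s = n then (if b = n then 1 else 0) else if b = s then
      (if s+a<n then (if s+(a+b2) mod Suc n>n then 1 else 0) else (if s+1+(a+b2) mod Suc n>n then 1 else 0)) else 0)"
| "kk n s ((True,b)#r) = (if s = n \<and> b = n then 1 else 0)"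
| "kk n s _ = 0"

lemma mw_set: "1 \<le> n \<Longrightarrow> red n h \<Longrightarrow> set (mw n h) \<subseteq> {1..n}"
  by (induction n h rule: mw.induct) (auto simp: NN_def qq_def)

lemma fin:
  assumes w: "set w \<subseteq> {1..n}" and x: "x < 2*(n+1)"
  shows "Mn_eq n (p @ NN n x @ w) (p @ NN n (x mod Suc n) @ w @ NN n ((n+1) * (if x > n then 1 else 0)))"
proof (cases "x > n")
  case False
  then show ?thesis by (simp add: Mn_eq.refl)
next
  case True
  have l: "x - Suc n < Suc n" using x by simp
  have "x mod Suc n = (x - Suc n) mod Suc n" using True le_mod_geq[of "Suc n" x] by simp
  also have "\<dots> = x - Suc n" using l by simp
  finally have xx: "x = x mod Suc n + (n+1)" using True by simp
  have "NN n x = NN n (x mod Suc n) @ NN n (n+1)" by (subst xx, rule NN_add)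
  moreover have "Mn_eq n ((p @ NN n (x mod Suc n)) @ (NN n (n+1) @ w)) ((p @ NN n (x mod Suc n)) @ (w @ NN n (n+1)))"
    by (rule Mn_eq_appL, rule D5[OF w])
  ultimately show ?thesis using True by simp
qed

lemma kk_n_n: "kk n n ((True,n)#r) = 1"
proof (cases r)
  case Nil then show ?thesis by simp
next
  case (Cons q r2)
  obtain k2 b2 where q: "q = (k2,b2)" by (cases q)
  show ?thesis
  proof (cases k2)
    case True then show ?thesis using Cons q by simp
  next
    case False then show ?thesis using Cons q by (cases r2) auto
  qed
qed

lemma kk_n_other: "\<not> (\<exists>r. h = (True,n)#r) \<Longrightarrow> kk n n h = 0"
  by (induction n n h rule: kk.induct) auto

lemma LML_n:
  assumes n: "1 \<le> n" and h: "red n h"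
  shows "Mn_eq n (n # mw n h) (mw n (act n n h) @ NN n ((n+1) * kk n n h))"
proof (cases h)
  case Nil
  then show ?thesis using n by (simp add: act_def qq_def NN_def Mn_eq.refl)
next
  case (Cons p r)
  obtain k b where p: "p = (k,b)" by (cases p)
  show ?thesis
  proof (cases k)
    case True
    show ?thesis
    proof (cases "b = n")
      case True
      have act: "act n n h = r" using Cons p \<open>k\<close> True by (simp add: act_def qq_def)
      have kk1: "kk n n h = 1" using Cons p \<open>k\<close> True kk_n_n by simp
      have w: "set (mw n r) \<subseteq> {1..n}" using mw_set[OF n] h Cons p by simp
      have "n # mw n h = NN n (n+1) @ mw n r" using Cons p \<open>k\<close> True by (simp add: NN_def)
      then show ?thesis using act kk1 D5[OF w] by simp
    next
      case False
      have bb: "b < n" using h Cons p \<open>k\<close> False by (simp add: qq_def)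
      have act: "act n n h = (True, Suc b) # r" using Cons p \<open>k\<close> bb by (simp add: act_def qq_def)
      have kk0: "kk n n h = 0" using Cons p \<open>k\<close> False kk_n_other by auto
      show ?thesis using act kk0 Cons p \<open>k\<close> by (simp add: NN_def Mn_eq.refl)
    qed
  next
    case False
    have act: "act n n h = (True, 1) # h" using Cons p False n by (simp add: act_def qq_def)
    have kk0: "kk n n h = 0" using Cons p False kk_n_other by auto
    show ?thesis using act kk0 by (simp add: NN_def Mn_eq.refl)
  qed
qed

declare Mn_eq_trans'[trans]

lemma mod2: "(x::nat) < 2 * m \<Longrightarrow> x mod m = (if x < m then x else x - m)"
proof (cases "x < m")
  case False
  assume "x < 2*m"
  then have "x - m < m" by simp
  then show ?thesis using False le_mod_geq[of m x] by simp
qed simp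

lemma kk_lt_other: "s \<noteq> n \<Longrightarrow> \<not> (\<exists>r. h = (True,s)#r) \<Longrightarrow> kk n s h = 0"
  by (induction n s h rule: kk.induct) auto

lemma E_sig: "1 \<le> s \<Longrightarrow> s \<le> n \<Longrightarrow> Mn_eq n (s # NN n s @ rest) (sig n s @ rest)"
  using Mn_eq_appR[OF D3[of s n], of rest] by simp

lemma E_sig': "1 \<le> s \<Longrightarrow> s \<le> n \<Longrightarrow> Mn_eq n (sig n s @ rest) (s # NN n s @ rest)"
  using Mn_eq_sym'[OF E_sig] by blast

lemma E_D2: "1 \<le> a \<Longrightarrow> a + j \<le> n \<Longrightarrow> Mn_eq n (sig n j @ a # rest) ((a+j) # NN n j @ rest)"
  using Mn_eq_appR[OF D2[of a j n], of rest] by simp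

lemma LML_A:
  assumes s: "1 \<le> s" "s < n" and h: "h = [] \<or> (\<exists>a r. h = (False,a)#r)"
  shows "Mn_eq n (s # mw n h) (mw n (act n s h) @ NN n ((n+1) * kk n s h))"
proof -
  have c: "(Suc n - s) mod Suc n = Suc n - s" "Suc n - s \<noteq> 0" "(s + (Suc n - s)) mod Suc n = 0" using s by auto
  have act: "act n s h = (False,s)#(True,Suc n - s)#h"
    using h s c by (auto simp: act_def qq_def)
  have k: "kk n s h = 0" using h by auto
  show ?thesis using act k c by (simp add: Mn_eq.refl)
qed

lemma LML_B:
  assumes s: "1 \<le> s" "s < n" and hr: "red n h" and h: "h = (True,b)#r" and b: "b \<noteq> s"
  shows "Mn_eq n (s # mw n h) (mw n (act n s h) @ NN n ((n+1) * kk n s h))"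
proof -
  have b1: "0 < b" "b < Suc n" using hr h by (auto simp: qq_def)
  define b' where "b' = (Suc n - s + b) mod Suc n"
  have x: "Suc n - s + b < 2 * Suc n" "Suc n - s + b \<noteq> Suc n" using s b b1 by auto
  have b'0: "b' \<noteq> 0" using mod2[OF x(1)] x(2) s b b1 by (auto simp: b'_def)
  have bs: "(s + b') mod Suc n = b"
  proof -
    have "(s + b') mod Suc n = (s + (Suc n - s + b)) mod Suc n" by (simp add: b'_def mod_simps)
    also have "s + (Suc n - s + b) = b + Suc n" using s by simp
    finally show ?thesis using b1 mod_add_self2[of b "Suc n"] by simp
  qed
  have act: "act n s h = (False,s)#(True,b')#r"
    using h s b'0 by (simp add: act_def qq_def b'_def)
  have k: "kk n s h = 0" using kk_lt_other[of s n h] h b s by auto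
  show ?thesis using act k bs h by (simp add: Mn_eq.refl)
qed

lemma LML_C1:
  assumes s: "1 \<le> s" "s < n" and h: "h = [(True,s)]"
  shows "Mn_eq n (s # mw n h) (mw n (act n s h) @ NN n ((n+1) * kk n s h))"
proof -
  have act: "act n s h = [(False,s)]" using h s by (simp add: act_def qq_def)
  have k: "kk n s h = 0" using h s by simp
  show ?thesis using act k h by (simp add: Mn_eq.refl)
qed

lemma LML_C2:
  assumes s: "1 \<le> s" "s < n" and hr: "red n h" and h: "h = [(True,s),(False,a)]"
  shows "Mn_eq n (s # mw n h) (mw n (act n s h) @ NN n ((n+1) * kk n s h))"
proof -
  have a: "0 < a" "a < n" using hr h by (auto simp: qq_def)
  have act: "act n s h = (if (s+a) mod n = 0 then [] else [(False,(s+a) mod n)])"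
    using h s by (simp add: act_def qq_def)
  have k: "kk n s h = (if s + a \<ge> n then 1 else 0)" using h s by simp
  have "Mn_eq n (s # mw n h) (s # NN n s @ (a # NN n a))" using h by (simp add: Mn_eq.refl)
  also have "Mn_eq n \<dots> (sig n s @ (a # NN n a))" by (rule E_sig) (use s in auto)
  also have "Mn_eq n \<dots> (sig n s @ sig n a)" using Mn_eq_appL[OF D3[of a n], of "sig n s"] a by simp
  finally have L: "Mn_eq n (s # mw n h) (sig n (s+a))" by (simp add: sig_add)
  show ?thesis
  proof (cases "s + a < n")
    case True
    have "Mn_eq n (sig n (s+a)) ((s+a) # NN n (s+a))" using E_sig'[of "s+a" n "[]"] True s by simp
    then show ?thesis using L act k True s by (auto intro: Mn_eq_trans')
  next
    case False
    show ?thesis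
    proof (cases "s + a = n")
      case True
      have "Mn_eq n (sig n n) (n # NN n n)" using E_sig'[of n n "[]"] s by simp
      then show ?thesis using L act k True s by (auto simp: NN_Suc intro: Mn_eq_trans')
    next
      case False2: False
      define a' where "a' = s + a - n"
      have a': "1 \<le> a'" "a' < n" "s + a = a' + n" using False False2 s a by (auto simp: a'_def)
      have m: "(s+a) mod n = a'" using a' by simp
      have "Mn_eq n (sig n (s+a)) (sig n a' @ sig n n)" using a' by (simp add: sig_add Mn_eq.refl)
      also have "Mn_eq n \<dots> (a' # NN n a' @ sig n n)" by (rule E_sig') (use a' in auto)
      also have "Mn_eq n \<dots> ((a' # NN n a') @ (n # NN n n))"
        using Mn_eq_appL[OF Mn_eq_sym'[OF D3[of n n]], of "a' # NN n a'"] a' by simp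
      finally have "Mn_eq n (sig n (s+a)) (a' # NN n a' @ NN n (n+1))" by (simp add: NN_Suc)
      moreover have "act n s h = [(False,a')]" using act m a' by simp
      moreover have "kk n s h = 1" using k False by simp
      ultimately show ?thesis using L by (auto intro: Mn_eq_trans')
    qed
  qed
qed

lemma LML_C3:
  assumes s: "1 \<le> s" "s < n" and hr: "red n h" and h: "h = (True,s)#(False,a)#(True,b2)#r"
  shows "Mn_eq n (s # mw n h) (mw n (act n s h) @ NN n ((n+1) * kk n s h))"
proof -
  have a: "0 < a" "a < n" "0 < b2" "b2 < Suc n" using hr h by (auto simp: qq_def)
  have w: "set (mw n r) \<subseteq> {1..n}" using mw_set[of n r] hr h s by auto
  define e where "e = (a + b2) mod Suc n"
  have e: "e \<le> n" by (simp add: e_def less_Suc_eq_le)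
  have act: "act n s h = (if (s+a) mod n = 0 then (True,b2)#r else (False,(s+a) mod n)#(True,b2)#r)"
    using h s by (simp add: act_def qq_def)
  have k: "kk n s h = (if s+a<n then (if s+e>n then 1 else 0) else (if s+1+e>n then 1 else 0))"
    using h s by (simp add: e_def)
  have mwh: "s # mw n h = s # NN n s @ a # NN n e @ mw n r" using h by (simp add: e_def)
  have L0: "Mn_eq n (s # mw n h) (sig n s @ a # NN n e @ mw n r)"
    unfolding mwh by (rule E_sig) (use s in auto)
  show ?thesis
  proof (cases "s + a < n")
    case True
    have "Mn_eq n (sig n s @ a # NN n e @ mw n r) ((a+s) # NN n s @ NN n e @ mw n r)"
      using E_D2[of a s n] True a by simp
    then have L: "Mn_eq n (s # mw n h) ([s+a] @ NN n (s+e) @ mw n r)"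
      using L0 by (auto simp: NN_add add.commute[of a s] intro: Mn_eq_trans')
    have x: "s + e < 2 * (n+1)" using e s by simp
    have me: "(s+e) mod Suc n = (s+a+b2) mod Suc n" by (simp add: e_def mod_simps add.assoc)
    have "mw n (act n s h) = [s+a] @ NN n ((s+e) mod Suc n) @ mw n r"
      using act True a me by simp
    moreover have "kk n s h = (if s + e > n then 1 else 0)" using k True by simp
    ultimately show ?thesis using L fin[OF w x, of "[s+a]"] by (auto intro: Mn_eq_trans')
  next
    case False
    show ?thesis
    proof (cases "s + a = n")
      case True
      have "Mn_eq n (sig n s @ a # NN n e @ mw n r) ((a+s) # NN n s @ NN n e @ mw n r)"
        using E_D2[of a s n] True a by simp
      then have L: "Mn_eq n (s # mw n h) ([] @ NN n (s+1+e) @ mw n r)"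
        using L0 True by (auto simp: NN_add NN_Suc add.commute[of a s] intro: Mn_eq_trans')
      have x: "s + 1 + e < 2 * (n+1)" using e s by simp
      have "(s+1+e) mod Suc n = ((s+1)+(a+b2)) mod Suc n" unfolding e_def by (rule mod_add_right_eq)
      also have "(s+1)+(a+b2) = s+1+a+b2" by simp
      also have "s+1+a+b2 = b2 + Suc n" using True by simp
      finally have me: "(s+1+e) mod Suc n = b2" using a mod_add_self2[of b2 "Suc n"] by simp
      have "mw n (act n s h) = [] @ NN n ((s+1+e) mod Suc n) @ mw n r"
        using act True me by simp
      moreover have "kk n s h = (if s + 1 + e > n then 1 else 0)" using k True by simp
      ultimately show ?thesis using L fin[OF w x, of "[]"] by (auto intro: Mn_eq_trans')
    next
      case False2: False
      define a' where "a' = s + a - n"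
      have a': "1 \<le> a'" "a' < n" "s + a = a' + n" "s = a' + (n - a)" using False False2 s a by (auto simp: a'_def)
      have m: "(s+a) mod n = a'" using a' by simp
      have "Mn_eq n (sig n s @ a # NN n e @ mw n r) (sig n a' @ (sig n (n-a) @ a # NN n e @ mw n r))"
        using a'(4) sig_add[of n a' "n-a"] by (simp add: Mn_eq.refl)
      also have "Mn_eq n \<dots> (sig n a' @ (n # NN n (n-a) @ NN n e @ mw n r))"
        using Mn_eq_appL[OF E_D2[of a "n-a" n "NN n e @ mw n r"], of "sig n a'"] a by simp
      also have "Mn_eq n \<dots> (a' # NN n a' @ (n # NN n (n-a) @ NN n e @ mw n r))"
        by (rule E_sig') (use a' in auto)
      finally have L1: "Mn_eq n (sig n s @ a # NN n e @ mw n r) ([a'] @ NN n (s+1+e) @ mw n r)"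
      proof -
        assume "Mn_eq n (sig n s @ a # NN n e @ mw n r) (a' # NN n a' @ (n # NN n (n-a) @ NN n e @ mw n r))"
        moreover have "NN n a' @ (n # NN n (n-a) @ NN n e @ mw n r) = NN n (s+1+e) @ mw n r"
        proof -
          have "NN n a' @ (n # NN n (n-a) @ NN n e) = NN n (a' + Suc (n - a) + e)"
            by (simp add: NN_add NN_Suc NN_Suc'[symmetric])
          also have "a' + Suc (n - a) + e = s + 1 + e" using a' by simp
          finally show ?thesis by simp
        qed
        ultimately show ?thesis by simp
      qed
      have L: "Mn_eq n (s # mw n h) ([a'] @ NN n (s+1+e) @ mw n r)" using L0 L1 by (rule Mn_eq_trans')
      have x: "s + 1 + e < 2 * (n+1)" using e s by simp
      have "(s+1+e) mod Suc n = ((s+1)+(a+b2)) mod Suc n" unfolding e_def by (rule mod_add_right_eq)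
      also have "(s+1)+(a+b2) = s+1+a+b2" by simp
      also have "s+1+a+b2 = (a' + b2) + Suc n" using a' by simp
      finally have me: "(s+1+e) mod Suc n = (a'+b2) mod Suc n" using mod_add_self2[of "a'+b2" "Suc n"] by simp
      have "mw n (act n s h) = [a'] @ NN n ((s+1+e) mod Suc n) @ mw n r"
        using act m a' me by simp
      moreover have "kk n s h = (if s + 1 + e > n then 1 else 0)" using k False by simp
      ultimately show ?thesis using L fin[OF w x, of "[a']"] by (auto intro: Mn_eq_trans')
    qed
  qed
qed

lemma LML:
  assumes s: "1 \<le> s" "s \<le> n" and hr: "red n h"
  shows "Mn_eq n (s # mw n h) (mw n (act n s h) @ NN n ((n+1) * kk n s h))"
proof (cases "s = n")
  case True
  then show ?thesis using LML_n[of n h] s hr by simp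
next
  case False
  then have s': "1 \<le> s" "s < n" using s by auto
  show ?thesis
  proof (cases h)
    case Nil then show ?thesis using LML_A[OF s', of h] by simp
  next
    case (Cons p r)
    obtain k b where p: "p = (k,b)" by (cases p)
    show ?thesis
    proof (cases k)
      case False then show ?thesis using LML_A[OF s', of h] Cons p by simp
    next
      case True
      show ?thesis
      proof (cases "b = s")
        case False then show ?thesis using LML_B[OF s' hr, of b r] Cons p \<open>k\<close> by simp
      next
        case bs: True
        show ?thesis
        proof (cases r)
          case Nil then show ?thesis using LML_C1[OF s'] Cons p \<open>k\<close> bs by simp
        next
          case (Cons p2 r2)
          obtain k2 a where p2: "p2 = (k2,a)" by (cases p2)
          have k2: "\<not> k2" using hr \<open>h = p # r\<close> p \<open>k\<close> Cons p2 by simp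
          show ?thesis
          proof (cases r2)
            case Nil then show ?thesis using LML_C2[OF s' hr, of a] \<open>h = p # r\<close> p \<open>k\<close> bs Cons p2 k2 by simp
          next
            case (Cons p3 r3)
            obtain k3 b2 where p3: "p3 = (k3,b2)" by (cases p3)
            have k3: "k3" using hr \<open>h = p # r\<close> p \<open>k\<close> \<open>r = p2 # r2\<close> p2 Cons p3 by simp
            show ?thesis using LML_C3[OF s' hr, of a b2 r3] \<open>h = p # r\<close> p \<open>k\<close> bs \<open>r = p2 # r2\<close> p2 k2 Cons p3 k3 by simp
          qed
        qed
      qed
    qed
  qed
qed




lemma sum_NN: "sum_list (NN n k) = n * k" by (simp add: NN_def sum_list_replicate)

lemma NN_set: "1 \<le> n \<Longrightarrow> set (NN n k) \<subseteq> {1..n}" by (auto simp: NN_def)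

lemma canon:
  assumes n: "1 \<le> n" shows "set u \<subseteq> {1..n} \<Longrightarrow> \<exists>T. Mn_eq n u (mw n (Phi n u) @ NN n ((n+1)*T))"
proof (induction u)
  case Nil then show ?case by (auto simp: Phi_def intro!: exI[of _ 0] Mn_eq.refl)
next
  case (Cons s u)
  then obtain T where T: "Mn_eq n u (mw n (Phi n u) @ NN n ((n+1)*T))" by auto
  have s: "1 \<le> s" "s \<le> n" using Cons.prems by auto
  have "Mn_eq n (s # u) (s # mw n (Phi n u) @ NN n ((n+1)*T))"
    using Mn_eq_appL[OF T, of "[s]"] by simp
  also have "Mn_eq n \<dots> ((mw n (act n s (Phi n u)) @ NN n ((n+1) * kk n s (Phi n u))) @ NN n ((n+1)*T))"
    using Mn_eq_appR[OF LML[OF s red_Phi[OF n]]] by simp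
  also have "(mw n (act n s (Phi n u)) @ NN n ((n+1) * kk n s (Phi n u))) @ NN n ((n+1)*T)
     = mw n (Phi n (s#u)) @ NN n ((n+1) * (kk n s (Phi n u) + T))"
    by (simp only: Phi_Cons append_assoc NN_add[symmetric] distrib_left)
  finally show ?case by blast
qed

lemma faithful:
  assumes n: "1 \<le> n" and u: "set u \<subseteq> {1..n}" and v: "set v \<subseteq> {1..n}"
    and P: "Phi n u = Phi n v" and S: "sum_list u = sum_list v"
  shows "Mn_eq n u v"
proof -
  obtain T1 where T1: "Mn_eq n u (mw n (Phi n u) @ NN n ((n+1)*T1))" using canon[OF n u] by auto
  obtain T2 where T2: "Mn_eq n v (mw n (Phi n v) @ NN n ((n+1)*T2))" using canon[OF n v] by auto
  have "sum_list u = sum_list (mw n (Phi n u)) + n*((n+1)*T1)" using Mn_eq_sum[OF T1] by (simp add: sum_NN)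
  moreover have "sum_list v = sum_list (mw n (Phi n u)) + n*((n+1)*T2)" using Mn_eq_sum[OF T2] P by (simp add: sum_NN)
  ultimately have "n*((n+1)*T1) = n*((n+1)*T2)" using S by linarith
  then have "(n+1)*T1 = (n+1)*T2" using n by simp
  then have "T1 = T2" by (metis mult_left_cancel add_gr_0 zero_less_one less_not_refl)
  then show ?thesis using T1 T2 P by (metis Mn_eq.sym Mn_eq.trans)
qed

lemma left_cancel:
  assumes n: "1 \<le> n" and b: "set b \<subseteq> {1..n}" and c: "set c \<subseteq> {1..n}"
    and e: "Mn_eq n (a @ b) (a @ c)"
  shows "Mn_eq n b c"
proof -
  have "foldr (act n) a (Phi n b) = foldr (act n) a (Phi n c)" using Phi_inv[OF e] by (simp add: Phi_app)
  then have P: "Phi n b = Phi n c" by (rule foldr_inj[OF n red_Phi[OF n] red_Phi[OF n]])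
  have "sum_list b = sum_list c" using Mn_eq_sum[OF e] by simp
  then show ?thesis using faithful[OF n b c P] by simp
qed




lemma Y_shape:
  assumes n: "1 \<le> n" and st: "1 \<le> s" "s < t" "t \<le> n" and g: "red n g"
    and nb: "\<not> (\<exists>B r. g = (True,B)#r \<and> s \<le> B)"
  shows "\<exists>B' r'. B' < s \<and> LL n True (Suc n - t) g = (True, Suc n - t + B')#r'"
proof (cases g)
  case Nil then show ?thesis using st by (auto simp: qq_def intro!: exI[of _ 0])
next
  case (Cons p r)
  obtain k b where p: "p = (k,b)" by (cases p)
  show ?thesis
  proof (cases k)
    case False then show ?thesis using st Cons p by (auto simp: qq_def intro!: exI[of _ 0])
  next
    case True
    then have bs: "b < s" using nb Cons p by auto
    have "Suc n - t + b < Suc n" "Suc n - t + b \<noteq> 0" using bs st by auto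
    then show ?thesis using True Cons p bs by (auto simp: qq_def add.commute)
  qed
qed

lemma GLp:
  assumes n: "1 \<le> n" and st: "1 \<le> s" "s < t" "t \<le> n"
    and e1: "set e1 \<subseteq> {1..n}" and e2: "set e2 \<subseteq> {1..n}"
    and eq: "Mn_eq n (s#e1) (t#e2)"
  shows "\<exists>f. set f \<subseteq> {1..n} \<and> Mn_eq n e2 (NN n s @ f)"
proof -
  define g where "g = Phi n e2"
  have rg: "red n g" using red_Phi[OF n] by (simp add: g_def)
  obtain T where T: "Mn_eq n e2 (mw n g @ NN n ((n+1)*T))" using canon[OF n e2] by (auto simp: g_def)
  have wg: "set (mw n g) \<subseteq> {1..n}" using mw_set[OF n rg] .
  show ?thesis
  proof (cases T)
    case (Suc T')
    have "mw n g @ NN n ((n+1)*T) = (mw n g @ NN n (n+1)) @ NN n ((n+1)*T')"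
      using Suc NN_add[of n "n+1" "(n+1)*T'"] by simp
    moreover have "Mn_eq n ((mw n g @ NN n (n+1)) @ NN n ((n+1)*T')) ((NN n (n+1) @ mw n g) @ NN n ((n+1)*T'))"
      by (rule Mn_eq_appR, rule Mn_eq_sym', rule D5[OF wg])
    moreover have "NN n (n+1) = NN n s @ NN n (n+1-s)" using st NN_add[of n s "n+1-s"] by simp
    ultimately have "Mn_eq n e2 (NN n s @ (NN n (n+1-s) @ mw n g @ NN n ((n+1)*T')))"
      using T by (auto intro: Mn_eq_trans')
    moreover have "set (NN n (n+1-s) @ mw n g @ NN n ((n+1)*T')) \<subseteq> {1..n}"
      using wg NN_set[OF n] by auto
    ultimately show ?thesis by blast
  next
    case 0
    then have T0: "Mn_eq n e2 (mw n g)" using T by simp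
    show ?thesis
    proof (cases "\<exists>B r. g = (True,B)#r \<and> s \<le> B")
      case True
      then obtain B r where Br: "g = (True,B)#r" "s \<le> B" by auto
      have "mw n g = NN n s @ (NN n (B-s) @ mw n r)" using Br NN_add[of n s "B-s"] by simp
      moreover have "set (NN n (B-s) @ mw n r) \<subseteq> {1..n}" using NN_set[OF n] mw_set[OF n, of r] rg Br by auto
      ultimately show ?thesis using T0 by (metis set_append)
    next
      case False
      obtain B' r' where Y: "B' < s" "LL n True (Suc n - t) g = (True, Suc n - t + B')#r'"
        using Y_shape[OF n st rg False] by blast
      define Yv where "Yv = LL n True (Suc n - t) g"
      have rY: "red n Yv" using red_LL[OF n rg] by (simp add: Yv_def)
      define G where "G = (True,s)#(False,t-s)#Yv"
      have rG: "red n G" using rY st Y by (simp add: G_def Yv_def qq_def)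
      have actG: "act n s G = (if t < n then (False,t)#Yv else Yv)"
        using st by (simp add: act_def G_def qq_def)
      have actg: "act n t g = (if t < n then (False,t)#Yv else Yv)"
        using st Y by (auto simp: act_def Yv_def qq_def)
      define g1 where "g1 = Phi n e1"
      have rg1: "red n g1" using red_Phi[OF n] by (simp add: g1_def)
      have "Phi n (s#e1) = Phi n (t#e2)" by (rule Phi_inv[OF eq])
      then have a1: "act n s g1 = act n t g" by (simp add: Phi_Cons g_def g1_def)
      then have "act n s g1 = act n s G" using actG actg by simp
      then have "g1 = G" by (rule act_inj[OF n rg1 rG])
      obtain T1 where T1: "Mn_eq n e1 (mw n g1 @ NN n ((n+1)*T1))" using canon[OF n e1] by (auto simp: g1_def)
      have kG: "kk n s G = 1"
      proof -
        have x: "(t - s + (Suc n - t + B')) mod Suc n = Suc n - s + B'" using st Y by simp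
        show ?thesis using x st Y by (simp add: G_def Yv_def)
      qed
      have kg: "kk n t g = 0"
      proof (cases "t = n")
        case True
        have "\<not> (\<exists>r. g = (True,n)#r)" using False st True by auto
        then show ?thesis using kk_n_other[of g n] True by simp
      next
        case False2: False
        have "\<not> (\<exists>r. g = (True,t)#r)" using False st by auto
        then show ?thesis using kk_lt_other[of t n g] False2 by simp
      qed
      have w1: "s + sum_list e1 = t + sum_list e2" using Mn_eq_sum[OF eq] by simp
      have w2: "sum_list e1 = sum_list (mw n g1) + n*((n+1)*T1)" using Mn_eq_sum[OF T1] by (simp add: sum_NN)
      have w3: "sum_list e2 = sum_list (mw n g)" using Mn_eq_sum[OF T0] .
      have w4: "s + sum_list (mw n g1) = sum_list (mw n (act n s g1)) + n*((n+1)* kk n s g1)"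
        using Mn_eq_sum[OF LML[of s n g1]] st rg1 by (simp add: sum_NN)
      have w5: "t + sum_list (mw n g) = sum_list (mw n (act n t g)) + n*((n+1)* kk n t g)"
        using Mn_eq_sum[OF LML[of t n g]] st rg by (simp add: sum_NN)
      have w4': "s + sum_list (mw n g1) = sum_list (mw n (act n t g)) + n*((n+1)* kk n s g1)"
        using w4 a1 by simp
      have "n*((n+1)*kk n s g1) + n*((n+1)*T1) = n*((n+1)* kk n t g)"
        using w1 w2 w3 w4' w5 by linarith
      then have "n*((n+1)*(1 + T1)) = 0" using kG kg \<open>g1 = G\<close> by (simp add: distrib_left)
      then show ?thesis using n by simp
    qed
  qed
qed




lemma Wset: "x \<in> Mn_words n \<longleftrightarrow> set x \<subseteq> {1..n}" by (auto simp: Mn_words_def)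

lemma W_app[simp]: "x @ y \<in> Mn_words n \<longleftrightarrow> x \<in> Mn_words n \<and> y \<in> Mn_words n" by (auto simp: Mn_words_def)
lemma W_Cons[simp]: "s # y \<in> Mn_words n \<longleftrightarrow> s \<in> {1..n} \<and> y \<in> Mn_words n" by (auto simp: Mn_words_def)
lemma W_Nil[simp]: "[] \<in> Mn_words n" by (auto simp: Mn_words_def)
lemma W_NN[simp]: "1 \<le> n \<Longrightarrow> NN n k \<in> Mn_words n" by (auto simp: Mn_words_def NN_def)

abbreviation rm where "rm n d a \<equiv> Mn_right_multiple n d a"

lemma rm_eq: "Mn_eq n d d' \<Longrightarrow> rm n d' a \<Longrightarrow> rm n d a"
  unfolding Mn_right_multiple_def by (blast intro: Mn_eq_trans')

lemma rm_eqa: "Mn_eq n a a' \<Longrightarrow> rm n d a \<Longrightarrow> rm n d a'"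
  unfolding Mn_right_multiple_def by (blast intro: Mn_eq_trans' Mn_eq_appR)

lemma rm_trans: "rm n d a \<Longrightarrow> rm n a b \<Longrightarrow> rm n d b"
proof -
  assume "rm n d a" "rm n a b"
  then obtain x y where x: "x \<in> Mn_words n" "Mn_eq n d (a@x)" and y: "y \<in> Mn_words n" "Mn_eq n a (b@y)"
    unfolding Mn_right_multiple_def by blast
  have "Mn_eq n d ((b@y)@x)" using x(2) Mn_eq_appR[OF y(2)] by (blast intro: Mn_eq_trans')
  then show ?thesis using x y unfolding Mn_right_multiple_def by (auto intro!: bexI[of _ "y@x"])
qed

lemma rm_app: "x \<in> Mn_words n \<Longrightarrow> rm n (a@x) a"
  unfolding Mn_right_multiple_def by (auto intro: Mn_eq.refl)

lemma rm_refl: "rm n a a"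
  unfolding Mn_right_multiple_def by (auto intro!: bexI[of _ "[]"] Mn_eq.refl)

lemma rm_prefix: "rm n (a@b) c \<Longrightarrow> b \<in> Mn_words n \<Longrightarrow> rm n (a@b) a"
  by (rule rm_app)

lemma rm_Cons: "rm n d (s#a) \<Longrightarrow> a \<in> Mn_words n \<Longrightarrow> rm n d [s]"
  using rm_trans[of n d "s#a" "[s]"] rm_app[of a n "[s]"] by simp

lemma rm_cons_mono: "rm n d a \<Longrightarrow> rm n (s#d) (s#a)"
  unfolding Mn_right_multiple_def using Mn_eq_appL[of n _ _ "[s]"] by fastforce

lemma lcm_lt:
  assumes n: "1 \<le> n" and st: "1 \<le> s" "s < t" "t \<le> n"
  shows "Mn_eq n (s # NN n s @ [t-s]) (t # NN n s)"
    and "\<And>d. d \<in> Mn_words n \<Longrightarrow> rm n d [s] \<Longrightarrow> rm n d [t] \<Longrightarrow> rm n d (t # NN n s)"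
proof -
  have "Mn_eq n (s # NN n s @ [t-s]) (sig n s @ [t-s])" by (rule E_sig) (use st in auto)
  also have "Mn_eq n \<dots> ((t-s+s) # NN n s @ [])" by (rule E_D2) (use st in auto)
  finally show "Mn_eq n (s # NN n s @ [t-s]) (t # NN n s)" using st by simp
next
  fix d assume d: "d \<in> Mn_words n" and ds: "rm n d [s]" and dt: "rm n d [t]"
  obtain e1 where e1: "e1 \<in> Mn_words n" "Mn_eq n d (s#e1)" using ds unfolding Mn_right_multiple_def by auto
  obtain e2 where e2: "e2 \<in> Mn_words n" "Mn_eq n d (t#e2)" using dt unfolding Mn_right_multiple_def by auto
  have "Mn_eq n (s#e1) (t#e2)" using e1 e2 by (blast intro: Mn_eq_trans' Mn_eq_sym')
  then have "\<exists>f. set f \<subseteq> {1..n} \<and> Mn_eq n e2 (NN n s @ f)"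
    using GLp[OF n st, of e1 e2] e1 e2 by (simp add: Wset)
  then obtain f where f: "set f \<subseteq> {1..n}" "Mn_eq n e2 (NN n s @ f)" by blast
  have "Mn_eq n d ((t # NN n s) @ f)" using e2(2) Mn_eq_appL[OF f(2), of "[t]"] by (auto intro: Mn_eq_trans')
  then show "rm n d (t # NN n s)" using f unfolding Mn_right_multiple_def by (auto simp: Wset)
qed

lemma gen_lcm:
  assumes n: "1 \<le> n" and s: "s \<in> {1..n}" and t: "t \<in> {1..n}"
  shows "\<exists>u v. u \<in> Mn_words n \<and> v \<in> Mn_words n \<and> Mn_eq n (s#u) (t#v) \<and>
     (\<forall>d\<in>Mn_words n. rm n d [s] \<longrightarrow> rm n d [t] \<longrightarrow> rm n d (s#u))"
proof (cases s t rule: linorder_cases)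
  case equal
  have "Mn_eq n (s#[]) (t#[])" using equal by (simp add: Mn_eq.refl)
  moreover have "\<forall>d\<in>Mn_words n. rm n d [s] \<longrightarrow> rm n d [t] \<longrightarrow> rm n d (s#[])" by simp
  moreover have "([]::nat list) \<in> Mn_words n" by simp
  ultimately show ?thesis by blast
next
  case less
  have st: "1 \<le> s" "s < t" "t \<le> n" using s t less by auto
  note L = lcm_lt[OF n st]
  have uW: "NN n s @ [t-s] \<in> Mn_words n" using n st by auto
  have vW: "NN n s \<in> Mn_words n" using n by simp
  have P: "\<forall>d\<in>Mn_words n. rm n d [s] \<longrightarrow> rm n d [t] \<longrightarrow> rm n d (s#(NN n s @ [t-s]))"
  proof (intro ballI impI)
    fix d assume "d \<in> Mn_words n" "rm n d [s]" "rm n d [t]"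
    then have "rm n d (t # NN n s)" by (rule L(2))
    then show "rm n d (s#(NN n s @ [t-s]))" by (rule rm_eqa[OF Mn_eq_sym'[OF L(1)]])
  qed
  show ?thesis using uW vW L(1) P by blast
next
  case greater
  have st: "1 \<le> t" "t < s" "s \<le> n" using s t greater by auto
  note L = lcm_lt[OF n st]
  have uW: "NN n t \<in> Mn_words n" using n by simp
  have vW: "NN n t @ [s-t] \<in> Mn_words n" using n st by auto
  have P: "\<forall>d\<in>Mn_words n. rm n d [s] \<longrightarrow> rm n d [t] \<longrightarrow> rm n d (s#NN n t)"
    using L(2) by blast
  have E: "Mn_eq n (s # NN n t) (t # (NN n t @ [s-t]))" using Mn_eq_sym'[OF L(1)] by simp
  show ?thesis using uW vW E P by blast
qed

lemma rm_obtain: "rm n d a \<Longrightarrow> \<exists>x\<in>Mn_words n. Mn_eq n d (a@x)"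
  unfolding Mn_right_multiple_def by blast

lemma rm_intro: "x \<in> Mn_words n \<Longrightarrow> Mn_eq n d (a@x) \<Longrightarrow> rm n d a"
  unfolding Mn_right_multiple_def by blast

lemma rm_nil: "b \<in> Mn_words n \<Longrightarrow> rm n b []"
  by (rule rm_intro[of b n b "[]"]) (auto intro: Mn_eq.refl)

lemma lcm_unpack:
  assumes "Mn_right_lcm n L a b"
  shows "L \<in> Mn_words n" "rm n L a" "rm n L b"
    "\<And>d. d \<in> Mn_words n \<Longrightarrow> rm n d a \<Longrightarrow> rm n d b \<Longrightarrow> rm n d L"
  using assms unfolding Mn_right_lcm_def Mn_common_right_multiple_def by auto

lemma lcm_intro:
  assumes "L \<in> Mn_words n" "rm n L a" "rm n L b"
    "\<And>d. d \<in> Mn_words n \<Longrightarrow> rm n d a \<Longrightarrow> rm n d b \<Longrightarrow> rm n d L"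
  shows "Mn_right_lcm n L a b"
  using assms unfolding Mn_right_lcm_def Mn_common_right_multiple_def by auto

lemma cancel1:
  assumes n: "1 \<le> n" and "Mn_eq n (s # x) (s # y)" "x \<in> Mn_words n" "y \<in> Mn_words n"
  shows "Mn_eq n x y"
  using left_cancel[OF n, of x y "[s]"] assms by (simp add: Wset)

lemma sum_lt: "Mn_eq n c (s # r) \<Longrightarrow> 1 \<le> s \<Longrightarrow> sum_list r < sum_list c"
  using Mn_eq_sum by fastforce

lemma lcm_aux:
  assumes n: "1 \<le> n"
  shows "\<forall>a b c. sum_list c = N \<longrightarrow> a \<in> Mn_words n \<longrightarrow> b \<in> Mn_words n \<longrightarrow> c \<in> Mn_words n
     \<longrightarrow> rm n c a \<longrightarrow> rm n c b \<longrightarrow> (\<exists>L. Mn_right_lcm n L a b)"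
proof (induction N rule: less_induct)
  case (less N)
  show ?case
  proof (intro allI impI)
    fix a b c
    assume cN: "sum_list c = N" and a: "a \<in> Mn_words n" and b: "b \<in> Mn_words n" and c: "c \<in> Mn_words n"
      and ca: "rm n c a" and cb: "rm n c b"
    have IH: "\<And>a b c. sum_list c < N \<Longrightarrow> a \<in> Mn_words n \<Longrightarrow> b \<in> Mn_words n \<Longrightarrow> c \<in> Mn_words n
       \<Longrightarrow> rm n c a \<Longrightarrow> rm n c b \<Longrightarrow> (\<exists>L. Mn_right_lcm n L a b)"
      using less.IH by blast
    show "\<exists>L. Mn_right_lcm n L a b"
    proof (cases a)
      case Nil
      have "Mn_right_lcm n b a b"
        by (rule lcm_intro) (use b Nil in \<open>auto intro: rm_refl rm_nil\<close>)
      then show ?thesis by blast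
    next
      case (Cons s a')
      show ?thesis
      proof (cases b)
        case Nil
        have "Mn_right_lcm n a a b"
          by (rule lcm_intro) (use a Nil in \<open>auto intro: rm_refl rm_nil\<close>)
        then show ?thesis by blast
      next
        case (Cons t b')
        have s: "s \<in> {1..n}" and a': "a' \<in> Mn_words n" using a \<open>a = s # a'\<close> by auto
        have t: "t \<in> {1..n}" and b': "b' \<in> Mn_words n" using b Cons by auto
        obtain u v where uv: "u \<in> Mn_words n" "v \<in> Mn_words n" "Mn_eq n (s#u) (t#v)"
          and P: "\<And>d. d \<in> Mn_words n \<Longrightarrow> rm n d [s] \<Longrightarrow> rm n d [t] \<Longrightarrow> rm n d (s#u)"
          using gen_lcm[OF n s t] by blast
        have cs: "rm n c [s]" using rm_Cons[of n c s a'] ca \<open>a = s # a'\<close> a' by simp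
        have ct: "rm n c [t]" using rm_Cons[of n c t b'] cb Cons b' by simp
        obtain f1 where f1: "f1 \<in> Mn_words n" "Mn_eq n c ((s#u)@f1)" using rm_obtain[OF P[OF c cs ct]] by blast
        have cvf: "Mn_eq n c (t#(v@f1))" using Mn_eq_trans'[OF f1(2) Mn_eq_appR[OF uv(3), of f1]] by simp
        obtain y where y: "y \<in> Mn_words n" "Mn_eq n c ((t#b')@y)" using rm_obtain[OF cb] Cons by blast
        have "Mn_eq n (t#(v@f1)) (t#(b'@y))" using Mn_eq_trans'[OF Mn_eq_sym'[OF cvf] y(2)] by simp
        then have c1eq: "Mn_eq n (v@f1) (b'@y)" using cancel1[OF n] uv f1 y b' by simp
        have c1s: "sum_list (v@f1) < N" using sum_lt[OF cvf] t cN by simp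
        obtain L3 where L3: "Mn_right_lcm n L3 v b'"
          using IH[OF c1s, of v b'] uv f1 b' c1eq rm_app[of f1 n v] rm_intro[OF y(1) c1eq]
          by auto
        note L3u = lcm_unpack[OF L3]
        define L1 where "L1 = t # L3"
        have L1W: "L1 \<in> Mn_words n" using L3u(1) t by (simp add: L1_def)
        have L1su: "rm n L1 (s#u)" unfolding L1_def
          by (rule rm_eqa[OF Mn_eq_sym'[OF uv(3)]], rule rm_cons_mono, rule L3u(2))
        have L1b: "rm n L1 b" unfolding L1_def using rm_cons_mono[OF L3u(3)] Cons by simp
        have L1min: "rm n d L1" if d: "d \<in> Mn_words n" "rm n d [s]" "rm n d b" for d
        proof -
          have dt: "rm n d [t]" using rm_Cons[of n d t b'] d Cons b' by simp
          obtain f where f: "f \<in> Mn_words n" "Mn_eq n d ((s#u)@f)" using rm_obtain[OF P[OF d(1,2) dt]] by blast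
          have dvf: "Mn_eq n d (t#(v@f))" using Mn_eq_trans'[OF f(2) Mn_eq_appR[OF uv(3), of f]] by simp
          obtain g where g: "g \<in> Mn_words n" "Mn_eq n d ((t#b')@g)" using rm_obtain[OF d(3)] Cons by blast
          have "Mn_eq n (t#(v@f)) (t#(b'@g))" using Mn_eq_trans'[OF Mn_eq_sym'[OF dvf] g(2)] by simp
          then have "Mn_eq n (v@f) (b'@g)" using cancel1[OF n] uv f g b' by simp
          then have "rm n (v@f) L3" using L3u(4)[of "v@f"] uv f rm_app[of f n v] rm_intro[OF g(1)] by simp
          then have "rm n (t#(v@f)) L1" unfolding L1_def by (rule rm_cons_mono)
          then show ?thesis by (rule rm_eq[OF dvf])
        qed
        obtain z where z: "z \<in> Mn_words n" "Mn_eq n L1 ((s#u)@z)" using rm_obtain[OF L1su] by blast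
        define q where "q = u @ z"
        have qW: "q \<in> Mn_words n" using uv z by (simp add: q_def)
        have L1q: "Mn_eq n L1 (s#q)" using z by (simp add: q_def)
        have cL1: "rm n c (s#q)" using rm_eqa[OF L1q L1min[OF c cs cb]] .
        obtain f2 where f2: "f2 \<in> Mn_words n" "Mn_eq n c ((s#q)@f2)" using rm_obtain[OF cL1] by blast
        obtain x where x: "x \<in> Mn_words n" "Mn_eq n c ((s#a')@x)" using rm_obtain[OF ca] \<open>a = s # a'\<close> by blast
        have "Mn_eq n (s#(a'@x)) (s#(q@f2))" using Mn_eq_trans'[OF Mn_eq_sym'[OF x(2)] f2(2)] by simp
        then have c2eq: "Mn_eq n (a'@x) (q@f2)" using cancel1[OF n] a' x qW f2 by simp
        have c2s: "sum_list (a'@x) < N" using sum_lt[of n c s "a'@x"] x s cN by simp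
        obtain L2 where L2: "Mn_right_lcm n L2 a' q"
          using IH[OF c2s, of a' q] a' x qW c2eq rm_app[of x n a'] rm_intro[OF f2(1) c2eq]
          by auto
        note L2u = lcm_unpack[OF L2]
        have "Mn_right_lcm n (s#L2) a b"
        proof (rule lcm_intro)
          show "s#L2 \<in> Mn_words n" using L2u(1) s by simp
          show "rm n (s#L2) a" using rm_cons_mono[OF L2u(2)] \<open>a = s # a'\<close> by simp
          have "rm n (s#L2) L1" by (rule rm_eqa[OF Mn_eq_sym'[OF L1q]], rule rm_cons_mono, rule L2u(3))
          then show "rm n (s#L2) b" using L1b by (rule rm_trans)
        next
          fix d assume d: "d \<in> Mn_words n" "rm n d a" "rm n d b"
          have ds: "rm n d [s]" using rm_Cons[of n d s a'] d \<open>a = s # a'\<close> a' by simp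
          have "rm n d (s#q)" using rm_eqa[OF L1q L1min[OF d(1) ds d(3)]] .
          then obtain f where f: "f \<in> Mn_words n" "Mn_eq n d ((s#q)@f)" using rm_obtain by blast
          obtain g where g: "g \<in> Mn_words n" "Mn_eq n d ((s#a')@g)" using rm_obtain[OF d(2)] \<open>a = s # a'\<close> by blast
          have "Mn_eq n (s#(q@f)) (s#(a'@g))" using Mn_eq_trans'[OF Mn_eq_sym'[OF f(2)] g(2)] by simp
          then have "Mn_eq n (q@f) (a'@g)" using cancel1[OF n] qW f g a' by simp
          then have "rm n (q@f) L2" using L2u(4)[of "q@f"] qW f rm_app[of f n q] rm_intro[OF g(1)] by simp
          then have "rm n (s#(q@f)) (s#L2)" by (rule rm_cons_mono)
          then show "rm n d (s#L2)" using rm_eq[of n d "s#(q@f)"] f(2) by simp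
        qed
        then show ?thesis by blast
      qed
    qed
  qed
qed

lemma lcm_ex:
  assumes n: "1 \<le> n" and a: "a \<in> Mn_words n" and b: "b \<in> Mn_words n" and c: "c \<in> Mn_words n"
    and ca: "rm n c a" and cb: "rm n c b"
  shows "\<exists>L. Mn_right_lcm n L a b"
proof -
  have H: "\<forall>a b c'. sum_list c' = sum_list c \<longrightarrow> a \<in> Mn_words n \<longrightarrow> b \<in> Mn_words n \<longrightarrow> c' \<in> Mn_words n
     \<longrightarrow> rm n c' a \<longrightarrow> rm n c' b \<longrightarrow> (\<exists>L. Mn_right_lcm n L a b)" by (rule lcm_aux[OF n])
  have "sum_list c = sum_list c \<longrightarrow> a \<in> Mn_words n \<longrightarrow> b \<in> Mn_words n \<longrightarrow> c \<in> Mn_words n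
     \<longrightarrow> rm n c a \<longrightarrow> rm n c b \<longrightarrow> (\<exists>L. Mn_right_lcm n L a b)"
    using spec[OF spec[OF spec[OF H, of a], of b], of c] .
  then show ?thesis using a b c ca cb by simp
qed

theorem proposition4p9:
  fixes n :: nat
  assumes "n \<ge> 1"
  shows "Mn_left_cancellative n \<and> Mn_conditional_right_lcms n"
proof
  show "Mn_left_cancellative n"
    unfolding Mn_left_cancellative_def
  proof (intro ballI impI)
    fix a b c assume "a \<in> Mn_words n" "b \<in> Mn_words n" "c \<in> Mn_words n" "Mn_eq n (a @ b) (a @ c)"
    then show "Mn_eq n b c" using left_cancel[OF assms, of b c a] by (simp add: Wset)
  qed
  show "Mn_conditional_right_lcms n"
    unfolding Mn_conditional_right_lcms_def
  proof (intro ballI impI)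
    fix a b assume a: "a \<in> Mn_words n" and b: "b \<in> Mn_words n"
      and "\<exists>c\<in>Mn_words n. Mn_common_right_multiple n c a b"
    then obtain c where c: "c \<in> Mn_words n" "rm n c a" "rm n c b"
      unfolding Mn_common_right_multiple_def by blast
    show "\<exists>c. Mn_right_lcm n c a b" by (rule lcm_ex[OF assms a b c])
  qed
qed


end
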